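(* Let $f$ be a DNF with $k$ terms and let $y\in\{0,1\}^n$ satisfy $f_{>\tau}$ and not $f_{\le\tau}$ ($\tau=1000k$). Fix any permutation $\pi$ and let $z_0,z_1,\dots$ be the sequence of the sweep process started at $y$. If $i\ge 1$ is such that $(z_i)_a=y_a$ for all $a\in P(y)$, then $\mathcal{T}_f(z_i)\subseteq\mathcal{T}_f(z_{i-1})$.
   Context: Terms are sets of literals, a DNF is a set of terms; $g_{\le L}$ / $g_{>L}$ are the sub-DNFs of terms of length $\le L$ / $>L$. For $x\in\{0,1\}^n$, $\mathcal{T}_f(x)$ is the set of terms of $f$ satisfied by $x$. Protected set: for each term $T\in f$ not satisfied by $y$, take the literal of $T$ with the smallest index $i\in[n]$ that $y$ does not satisfy; $P(y)\subseteq[n]$ is the set of all these indices. Sweep process: given $y$ with $f(y)=1$ and a permutation $\pi$ listing the indices of $[n]$ as $\pi(0),\pi(1),\dots,\pi(n-1)$, set $z_0=y$ and for each $i$, $z_{i+1}=z_i^{\oplus\pi(i)}$ if $f(z_i^{\oplus\pi(i)})=1$ and $z_{i+1}=z_i$ otherwise, where $x^{\oplus j}$ denotes $x$ with bit $j$ flipped. *)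

theory Defs
  imports "HOL-Combinatorics.Permutations"
begin

text \<open>A literal is a pair (i, b): it is satisfied by x iff x i = b.
  Points of {0,1}^n are functions nat => bool (only coordinates < n matter).\<close>
type_synonym lit = "nat \<times> bool"
type_synonym dnf_term = "lit set"
type_synonym dnf = "dnf_term set"

definition lit_sat :: "lit \<Rightarrow> (nat \<Rightarrow> bool) \<Rightarrow> bool" where
  "lit_sat l x \<longleftrightarrow> x (fst l) = snd l"

definition term_sat :: "dnf_term \<Rightarrow> (nat \<Rightarrow> bool) \<Rightarrow> bool" where
  "term_sat T x \<longleftrightarrow> (\<forall>l\<in>T. lit_sat l x)"

definition dnf_eval :: "dnf \<Rightarrow> (nat \<Rightarrow> bool) \<Rightarrow> bool" where
  "dnf_eval f x \<longleftrightarrow> (\<exists>T\<in>f. term_sat T x)"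

definition dnf_le :: "dnf \<Rightarrow> nat \<Rightarrow> dnf" where
  "dnf_le f L = {T \<in> f. card T \<le> L}"

definition dnf_gt :: "dnf \<Rightarrow> nat \<Rightarrow> dnf" where
  "dnf_gt f L = {T \<in> f. card T > L}"

definition sat_terms :: "dnf \<Rightarrow> (nat \<Rightarrow> bool) \<Rightarrow> dnf_term set" where
  "sat_terms f x = {T \<in> f. term_sat T x}"

definition protected_set :: "dnf \<Rightarrow> (nat \<Rightarrow> bool) \<Rightarrow> nat set" where
  "protected_set f y =
     {LEAST i. \<exists>b. (i, b) \<in> T \<and> \<not> lit_sat (i, b) y | T. T \<in> f \<and> \<not> term_sat T y}"

definition flip :: "(nat \<Rightarrow> bool) \<Rightarrow> nat \<Rightarrow> (nat \<Rightarrow> bool)" where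
  "flip x j = x(j := \<not> x j)"

fun sweep :: "dnf \<Rightarrow> (nat \<Rightarrow> nat) \<Rightarrow> (nat \<Rightarrow> bool) \<Rightarrow> nat \<Rightarrow> (nat \<Rightarrow> bool)" where
  "sweep f \<pi> y 0 = y"
| "sweep f \<pi> y (Suc i) =
     (let z = sweep f \<pi> y i in
      if dnf_eval f (flip z (\<pi> i)) then flip z (\<pi> i) else z)"

end

theory Submission
  imports Defs
begin

lemma sweep_unchanged:
  "a \<notin> \<pi> ` {..<m} \<Longrightarrow> sweep f \<pi> y m a = y a"
  by (induction m) (auto simp: Let_def flip_def lessThan_Suc)

theorem lemma4p4:
  fixes f :: dnf and k n :: nat and y :: "nat \<Rightarrow> bool" and \<pi> :: "nat \<Rightarrow> nat" and i :: nat
  assumes "finite f" and "card f = k"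
    and "\<forall>T\<in>f. \<forall>l\<in>T. fst l < n"
    and "dnf_eval (dnf_gt f (1000 * k)) y"
    and "\<not> dnf_eval (dnf_le f (1000 * k)) y"
    and "\<pi> permutes {..<n}"
    and "1 \<le> i" and "i \<le> n"
    and "\<forall>a\<in>protected_set f y. sweep f \<pi> y i a = y a"
  shows "sat_terms f (sweep f \<pi> y i) \<subseteq> sat_terms f (sweep f \<pi> y (i - 1))"
proof
  obtain m where im: "i = Suc m" using assms(7) by (cases i) auto
  define z where "z = sweep f \<pi> y m"
  define j where "j = \<pi> m"
  have inj: "inj \<pi>" using assms(6) permutes_inj by blast
  have zj: "z j = y j" unfolding z_def j_def
    by (rule sweep_unchanged) (use inj in \<open>auto dest: injD\<close>)
  fix T assume T: "T \<in> sat_terms f (sweep f \<pi> y i)"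
  show "T \<in> sat_terms f (sweep f \<pi> y (i - 1))"
  proof (cases "dnf_eval f (flip z j)")
    case False
    then have "sweep f \<pi> y i = z" by (simp add: im z_def j_def Let_def)
    then show ?thesis using T im z_def by simp
  next
    case True
    then have si: "sweep f \<pi> y i = flip z j" by (simp add: im z_def j_def Let_def)
    show ?thesis
    proof (rule ccontr)
      assume "T \<notin> sat_terms f (sweep f \<pi> y (i - 1))"
      then have nz: "\<not> term_sat T z" and Tf: "T \<in> f" and sz: "term_sat T (flip z j)"
        using T si im z_def by (auto simp: sat_terms_def)
      from nz obtain c b where cb: "(c, b) \<in> T" "z c \<noteq> b"
        unfolding term_sat_def lit_sat_def by fastforce
      from sz cb have "flip z j c = b" by (auto simp: term_sat_def lit_sat_def)
      with cb have cj: "c = j" by (auto simp: flip_def split: if_splits)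
      show False
      proof (cases "term_sat T y")
        case True
        then have "y c = b" using cb by (auto simp: term_sat_def lit_sat_def)
        then show False using cb cj zj by simp
      next
        case False
        define P where "P = (\<lambda>a. \<exists>b. (a, b) \<in> T \<and> \<not> lit_sat (a, b) y)"
        have ex: "\<exists>a. P a" using False unfolding P_def term_sat_def by auto
        define a where "a = (LEAST a. P a)"
        have Pa: "P a" unfolding a_def using ex by (metis LeastI)
        have "a \<in> protected_set f y" unfolding protected_set_def a_def P_def
          using Tf False by blast
        then have "flip z j a = y a" using assms(9) si by simp
        moreover from Pa obtain b' where "(a, b') \<in> T" "y a \<noteq> b'"
          unfolding P_def lit_sat_def by auto
        moreover have "flip z j a = b'" using sz \<open>(a, b') \<in> T\<close>
          by (auto simp: term_sat_def lit_sat_def)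
        ultimately show False by simp
      qed
    qed
  qed
qed

end
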